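(* Let $\epsilon>0$ and let $\mathcal{P}^\epsilon$ be the strategy \[ M_n=\begin{cases}-\epsilon s_{n-1} & \text{if } |s_{i-1}|\le\sqrt{i+2/\epsilon}-1 \text{ for all } i=1,\dots,n,\\ 0&\text{otherwise.}\end{cases} \] Then $\mathcal{P}^\epsilon$ weakly forces the event \[ E_3^\epsilon:=\Bigl\{\xi:\ \exists n\ |s_n|>\sqrt{n+1+2/\epsilon}-1\ \ \text{or}\ \ \bigl(\limsup_{n\to\infty}|s_n|=\infty\ \text{and}\ s_n\ne0\ \text{for all but finitely many } n\bigr)\Bigr\}. \]
   Context: Fair-coin game: in rounds $n=1,2,\dots$ Skeptic announces $M_n\in\mathbb{R}$ (depending only on $x_1,\dots,x_{n-1}$), then Reality announces $x_n\in\{-1,1\}$. A path is an infinite sequence $\xi=x_1x_2\cdots\in\{-1,1\}^{\mathbb{N}}$, and $\Omega$ is the set of paths. We write $s_n:=x_1+\cdots+x_n$, with $s_0=0$. The capital process of a strategy with zero initial capital is $\mathcal{K}^{\mathcal{P}}_n=\sum_{k=1}^nM_kx_k$. A strategy $\mathcal{P}$ weakly forces $E\subseteq\Omega$ if $\mathcal{K}^{\mathcal{P}}_n(\xi)\ge-1$ for all $\xi\in\Omega$ and $n\ge0$, and $\limsup_n\mathcal{K}^{\mathcal{P}}_n(\xi)=\infty$ for every $\xi\notin E$. Skeptic can weakly force $E$ if some strategy does. *)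

theory Defs
  imports "HOL-Analysis.Analysis" "HOL-Library.Liminf_Limsup"
begin

text \<open>Paths: xi k is Reality's move x_(k+1) (0-indexed), each in {-1,1}.\<close>
definition paths :: "(nat \<Rightarrow> real) set" where
  "paths = {xi. \<forall>k. xi k \<in> {-1, 1}}"

definition ssum :: "(nat \<Rightarrow> real) \<Rightarrow> nat \<Rightarrow> real" where
  "ssum xi n = (\<Sum>k<n. xi k)"

text \<open>A strategy maps the history x_1..x_(n-1) (a list) to the move M_n.\<close>
type_synonym strategy = "real list \<Rightarrow> real"

definition capital :: "strategy \<Rightarrow> nat \<Rightarrow> (nat \<Rightarrow> real) \<Rightarrow> real" where
  "capital P n xi = (\<Sum>k<n. P (map xi [0..<k]) * xi k)"

definition weakly_forces :: "strategy \<Rightarrow> (nat \<Rightarrow> real) set \<Rightarrow> bool" where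
  "weakly_forces P E \<longleftrightarrow>
     (\<forall>xi\<in>paths. \<forall>n. capital P n xi \<ge> -1) \<and>
     (\<forall>xi\<in>paths. xi \<notin> E \<longrightarrow> limsup (\<lambda>n. ereal (capital P n xi)) = \<infinity>)"

definition P_eps :: "real \<Rightarrow> strategy" where
  "P_eps eps h =
     (if \<forall>i\<in>{1..length h + 1}. \<bar>sum_list (take (i - 1) h)\<bar> \<le> sqrt (real i + 2 / eps) - 1
      then - eps * sum_list h else 0)"

definition E3 :: "real \<Rightarrow> (nat \<Rightarrow> real) set" where
  "E3 eps = {xi. (\<exists>n. \<bar>ssum xi n\<bar> > sqrt (real n + 1 + 2 / eps) - 1) \<or>
       (limsup (\<lambda>n. ereal \<bar>ssum xi n\<bar>) = \<infinity> \<and> (\<forall>\<^sub>F n in sequentially. ssum xi n \<noteq> 0))}"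

end

theory Submission
  imports Defs
begin

definition actv :: "real \<Rightarrow> (nat \<Rightarrow> real) \<Rightarrow> nat \<Rightarrow> bool" where
  "actv eps xi k = (\<forall>j\<le>k. \<bar>ssum xi j\<bar> \<le> sqrt (real j + 1 + 2 / eps) - 1)"

lemma sum_list_map_upt: "sum_list (map xi [0..<n]) = ssum xi n"
  unfolding ssum_def by (induction n) auto

lemma P_map:
  "P_eps eps (map xi [0..<k]) = (if actv eps xi k then - eps * ssum xi k else 0)"
proof -
  have t: "sum_list (take (i - 1) (map xi [0..<k])) = ssum xi (i - 1)" if "i \<in> {1..k+1}" for i
  proof -
    have "i - 1 \<le> k" using that by auto
    then have "take (i-1) [0..<k] = [0..<i-1]" using take_upt[of 0 "i-1" k] by simp
    then show ?thesis by (simp add: take_map sum_list_map_upt)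
  qed
  have "(\<forall>i\<in>{1..length (map xi [0..<k]) + 1}. \<bar>sum_list (take (i - 1) (map xi [0..<k]))\<bar> \<le> sqrt (real i + 2 / eps) - 1)
     \<longleftrightarrow> actv eps xi k"
  proof
    assume H: "\<forall>i\<in>{1..length (map xi [0..<k]) + 1}. \<bar>sum_list (take (i - 1) (map xi [0..<k]))\<bar> \<le> sqrt (real i + 2 / eps) - 1"
    show "actv eps xi k" unfolding actv_def
    proof (intro allI impI)
      fix j assume "j \<le> k"
      hence "Suc j \<in> {1..length (map xi [0..<k]) + 1}" by simp
      from H[rule_format, OF this] t[of "Suc j"] \<open>j \<le> k\<close>
      show "\<bar>ssum xi j\<bar> \<le> sqrt (real j + 1 + 2 / eps) - 1" by (simp add: add.commute)
    qed
  next
    assume A: "actv eps xi k"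
    show "\<forall>i\<in>{1..length (map xi [0..<k]) + 1}. \<bar>sum_list (take (i - 1) (map xi [0..<k]))\<bar> \<le> sqrt (real i + 2 / eps) - 1"
    proof
      fix i assume i: "i \<in> {1..length (map xi [0..<k]) + 1}"
      then have "i - 1 \<le> k" by auto
      with A have "\<bar>ssum xi (i-1)\<bar> \<le> sqrt (real (i-1) + 1 + 2 / eps) - 1" unfolding actv_def by blast
      moreover have "real (i-1) + 1 = real i" using i by auto
      ultimately show "\<bar>sum_list (take (i - 1) (map xi [0..<k]))\<bar> \<le> sqrt (real i + 2 / eps) - 1"
        using t[of i] i by simp
    qed
  qed
  then show ?thesis unfolding P_eps_def by (simp add: sum_list_map_upt)
qed

lemma cap_Suc: "capital P (Suc n) xi = capital P n xi + P (map xi [0..<n]) * xi n"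
  unfolding capital_def by simp

lemma ssum_Suc: "ssum xi (Suc n) = ssum xi n + xi n"
  unfolding ssum_def by simp

lemma cap_active:
  assumes "xi \<in> paths" "\<forall>k<n. actv eps xi k"
  shows "capital (P_eps eps) n xi = eps / 2 * (real n - (ssum xi n)^2)"
  using assms(2)
proof (induction n)
  case 0 then show ?case by (simp add: capital_def ssum_def)
next
  case (Suc n)
  have x: "xi n = 1 \<or> xi n = -1" using assms(1) unfolding paths_def by auto
  from Suc have "actv eps xi n" by simp
  with Suc show ?case using x
    by (auto simp: cap_Suc P_map ssum_Suc power2_eq_square algebra_simps)
qed

lemma bound:
  assumes "xi \<in> paths" "actv eps xi k" "eps > 0"
  shows "eps / 2 * (real (Suc k) - (ssum xi (Suc k))^2) \<ge> -1"
proof -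
  have x: "xi k = 1 \<or> xi k = -1" using assms(1) unfolding paths_def by auto
  have a: "\<bar>ssum xi k\<bar> \<le> sqrt (real k + 1 + 2 / eps) - 1" using assms(2) unfolding actv_def by blast
  have "\<bar>ssum xi (Suc k)\<bar> \<le> \<bar>ssum xi k\<bar> + 1" using x by (auto simp: ssum_Suc)
  also have "\<dots> \<le> sqrt (real k + 1 + 2 / eps)" using a by simp
  finally have b: "\<bar>ssum xi (Suc k)\<bar> \<le> sqrt (real k + 1 + 2 / eps)" .
  have "(ssum xi (Suc k))^2 = \<bar>ssum xi (Suc k)\<bar>^2" by simp
  also have "\<dots> \<le> (sqrt (real k + 1 + 2 / eps))^2"
    using b by (intro power_mono) auto
  also have "\<dots> = real k + 1 + 2 / eps" using assms(3) by simp
  finally have "(ssum xi (Suc k))^2 \<le> real k + 1 + 2 / eps" .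
  then have "real (Suc k) - (ssum xi (Suc k))^2 \<ge> - 2 / eps" by simp
  then have "eps / 2 * (real (Suc k) - (ssum xi (Suc k))^2) \<ge> eps / 2 * (- 2 / eps)"
    using assms(3) by (intro mult_left_mono) auto
  then show ?thesis using assms(3) by simp
qed

lemma actv_mono: "actv eps xi n \<Longrightarrow> m \<le> n \<Longrightarrow> actv eps xi m"
  unfolding actv_def by auto

lemma frozen:
  assumes "\<not> actv eps xi m" "m \<le> n"
  shows "capital (P_eps eps) n xi = capital (P_eps eps) m xi"
  using assms(2)
proof (induction n)
  case 0 then show ?case by simp
next
  case (Suc n)
  show ?case
  proof (cases "m = Suc n")
    case False
    with Suc have "m \<le> n" by simp
    with assms(1) have "\<not> actv eps xi n" using actv_mono by blast
    with Suc.IH \<open>m \<le> n\<close> show ?thesis by (simp add: cap_Suc P_map)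
  qed simp
qed

lemma cap_good:
  assumes "xi \<in> paths" "eps > 0" "\<forall>k<n. actv eps xi k"
  shows "capital (P_eps eps) n xi \<ge> -1"
proof (cases n)
  case 0 then show ?thesis by (simp add: capital_def)
next
  case (Suc k)
  then show ?thesis using cap_active[OF assms(1) assms(3)] bound[OF assms(1) _ assms(2), of k] assms(3)
    by simp
qed

lemma limsup_infI:
  assumes "\<And>B n. \<exists>m\<ge>n. f m > B"
  shows "limsup (\<lambda>n. ereal (f n)) = \<infinity>"
proof -
  have "(SUP m\<in>{n..}. ereal (f m)) = \<infinity>" for n
    unfolding top_ereal_def[symmetric] SUP_eq_top_iff
  proof (intro allI impI)
    fix x :: ereal assume "x < top"
    then have "x \<noteq> \<infinity>" by (simp add: top_ereal_def)
    then obtain r :: nat where "x < ereal (real r)" using less_PInf_Ex_of_nat by blast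
    moreover obtain m where "m \<ge> n" "f m > real r" using assms by blast
    ultimately show "\<exists>i\<in>{n..}. x < ereal (f i)" by (intro bexI[of _ m]) (auto intro: less_trans)
  qed
  then show ?thesis unfolding limsup_INF_SUP by simp
qed

theorem lemma3:
  fixes eps :: real
  assumes "eps > 0"
  shows "weakly_forces (P_eps eps) (E3 eps)"
  unfolding weakly_forces_def
proof (intro conjI ballI allI impI)
  fix xi n assume xi: "xi \<in> paths"
  show "capital (P_eps eps) n xi \<ge> -1"
  proof (cases "\<forall>k<n. actv eps xi k")
    case True then show ?thesis using cap_good xi assms by blast
  next
    case False
    define m where "m = (LEAST k. \<not> actv eps xi k)"
    from False have ex: "\<exists>k. \<not> actv eps xi k" by blast
    have m1: "\<not> actv eps xi m" unfolding m_def using ex by (rule LeastI_ex)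
    have m2: "\<forall>k<m. actv eps xi k" unfolding m_def using not_less_Least by blast
    have "m \<le> n" using False m2 by (meson not_le_imp_less order_less_trans)
    then have "capital (P_eps eps) n xi = capital (P_eps eps) m xi" using frozen m1 by blast
    then show ?thesis using cap_good[OF xi assms m2] by simp
  qed
next
  fix xi assume xi: "xi \<in> paths" and nE: "xi \<notin> E3 eps"
  from nE have A: "\<forall>n. \<bar>ssum xi n\<bar> \<le> sqrt (real n + 1 + 2 / eps) - 1"
    and B: "limsup (\<lambda>n. ereal \<bar>ssum xi n\<bar>) \<noteq> \<infinity> \<or> \<not> (\<forall>\<^sub>F n in sequentially. ssum xi n \<noteq> 0)"
    unfolding E3_def by (auto simp: not_less)
  have act: "\<forall>k<n. actv eps xi k" for n using A unfolding actv_def by blast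
  have cap: "capital (P_eps eps) n xi = eps / 2 * (real n - (ssum xi n)^2)" for n
    using cap_active[OF xi act] .
  show "limsup (\<lambda>n. ereal (capital (P_eps eps) n xi)) = \<infinity>"
  proof (rule limsup_infI)
    fix Bd :: real and n :: nat
    from B show "\<exists>m\<ge>n. capital (P_eps eps) m xi > Bd"
    proof
      assume "limsup (\<lambda>n. ereal \<bar>ssum xi n\<bar>) \<noteq> \<infinity>"
      then obtain C :: nat where "limsup (\<lambda>n. ereal \<bar>ssum xi n\<bar>) < ereal (real C)"
        using less_PInf_Ex_of_nat by blast
      then have "\<forall>\<^sub>F n in sequentially. ereal \<bar>ssum xi n\<bar> < ereal (real C)"
        by (rule Limsup_lessD)
      then obtain N where N: "\<And>k. k \<ge> N \<Longrightarrow> \<bar>ssum xi k\<bar> < real C"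
        unfolding eventually_sequentially by auto
      define m where "m = max n (max N (nat (ceiling ((real C)^2 + 2 * Bd / eps)) + 1))"
      have "\<bar>ssum xi m\<bar> < real C" using N m_def by simp
      then have "(ssum xi m)^2 \<le> (real C)^2"
        by (metis abs_ge_zero less_imp_le power2_abs power_mono)
      moreover have "real m > (real C)^2 + 2 * Bd / eps" unfolding m_def by linarith
      ultimately have "real m - (ssum xi m)^2 > 2 * Bd / eps" by linarith
      then have "eps / 2 * (real m - (ssum xi m)^2) > eps / 2 * (2 * Bd / eps)"
        using assms by (intro mult_strict_left_mono) auto
      then have "capital (P_eps eps) m xi > Bd" using assms cap[of m] by simp
      moreover have "m \<ge> n" unfolding m_def by simp
      ultimately show ?thesis by blast
    next
      assume "\<not> (\<forall>\<^sub>F n in sequentially. ssum xi n \<noteq> 0)"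
      then have fr: "\<forall>N. \<exists>k\<ge>N. ssum xi k = 0"
        unfolding eventually_sequentially by auto
      obtain m where m: "m \<ge> max n (nat (ceiling (2 * Bd / eps)) + 1)" "ssum xi m = 0"
        using fr by blast
      have "real m > 2 * Bd / eps" using m(1) by linarith
      then have "eps / 2 * real m > eps / 2 * (2 * Bd / eps)"
        using assms by (intro mult_strict_left_mono) auto
      then have "capital (P_eps eps) m xi > Bd" using assms cap[of m] m(2) by simp
      moreover have "m \<ge> n" using m by simp
      ultimately show ?thesis by blast
    qed
  qed
qed

end
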